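(* Let $\xi,\eta$ be real with $1,\xi,\eta$ linearly independent over $\mathbb{Q}$, $\mathbf{u}=(1,\xi,\eta)$, and take $\mathcal{N}(\mathbf{x})=\|\mathbf{x}\|$, $\Delta(\mathbf{x})=\|\mathbf{u}\wedge\mathbf{x}\|$. For every $\alpha$ with $0\le\alpha<\limsup_{q\to\infty}(-L_1^*(q))/q$, setting $\mu=\alpha/(1-\alpha)$, one has $$\kappa_\alpha(-L_1^* )=\frac{\widehat{\nu}_\mu(\xi,\eta)}{1+\widehat{\nu}_\mu(\xi,\eta)}.$$
   Context: $\|\cdot\|$ is the Euclidean norm, $\wedge$ the cross product on $\mathbb{R}^3$. $L_1^*(q)$ is the logarithm of the first successive minimum, with respect to $\mathbb{Z}^3$, of the convex body $\{\mathbf{x}\in\mathbb{R}^3:\|\mathbf{x}\|\le e^q,\ \|\mathbf{x}\wedge\mathbf{u}\|\le1\}$; $-L_1^*$ is continuous piecewise linear with slopes $0,1$. For an unbounded continuous piecewise linear $P$ with slopes $0,1$ changing from slope $1$ to $0$ infinitely often: $(q_i)$ is the increasing sequence of abscissas where the slope changes from $1$ to $0$; for $\alpha<\limsup_q P(q)/q$, $(q_{i,\alpha})_i$ is the increasing subsequence of the $q_k$ with $P(q_k)/q_k\ge\alpha$, $r_{i,\alpha}=q_{i+1,\alpha}-P(q_{i+1,\alpha})+P(q_{i,\alpha})$, and $\kappa_\alpha(P)=\liminf_i P(q_{i,\alpha})/r_{i,\alpha}$. For $\mu\ge0$ less than $\lambda(\xi,\eta)$ (the supremum of $\lambda>0$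 such that $1\le|x_0|\le X$, $\max(|x_0\xi-x_1|,|x_0\eta-x_2|)\le X^{-\lambda}$ has a solution in $\mathbb{Z}^3\setminus\{0\}$ for arbitrarily large $X$), $\widehat{\nu}_\mu(\xi,\eta)$ is the supremum of real $\nu$ such that $\mathcal{N}(\mathbf{x})\le X$, $\Delta(\mathbf{x})\le\min(X^{-\nu},\mathcal{N}(\mathbf{x})^{-\mu})$ has a solution $\mathbf{x}\in\mathbb{Z}^3\setminus\{0\}$ for every sufficiently large $X$. *)

theory Defs
  imports "HOL-Analysis.Analysis"
begin

definition int_point :: "real^3 \<Rightarrow> bool" where
  "int_point x \<longleftrightarrow> (\<forall>i. x $ i \<in> \<int>)"

text \<open>L_1^*(q): logarithm of the first successive minimum, with respect to Z^3, of the
 convex body {x : norm x \<le> e^q, norm (x \<and> u) \<le> 1}.\<close>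
definition L1star :: "real^3 \<Rightarrow> real \<Rightarrow> real" where
  "L1star u q = ln (Inf {lam. lam > 0 \<and> (\<exists>x. int_point x \<and> x \<noteq> 0 \<and>
      norm x \<le> lam * exp q \<and> norm (cross3 x u) \<le> lam)})"

definition slope_change_10 :: "(real \<Rightarrow> real) \<Rightarrow> real set" where
  "slope_change_10 P = {q. \<exists>e>0. (\<forall>t\<in>{q-e..q}. P t = P q - (q - t)) \<and>
                                 (\<forall>t\<in>{q..q+e}. P t = P q)}"

text \<open>Increasing enumeration of a (discrete, bounded below) set of reals.\<close>
primrec enum_real :: "real set \<Rightarrow> nat \<Rightarrow> real" where
  "enum_real S 0 = Inf S"
| "enum_real S (Suc i) = Inf {t \<in> S. t > enum_real S i}"

definition q_alpha :: "(real \<Rightarrow> real) \<Rightarrow> real \<Rightarrow> nat \<Rightarrow> real" where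
  "q_alpha P \<alpha> = enum_real {q \<in> slope_change_10 P. P q / q \<ge> \<alpha>}"

definition r_alpha :: "(real \<Rightarrow> real) \<Rightarrow> real \<Rightarrow> nat \<Rightarrow> real" where
  "r_alpha P \<alpha> i = q_alpha P \<alpha> (Suc i) - P (q_alpha P \<alpha> (Suc i)) + P (q_alpha P \<alpha> i)"

definition kappa :: "real \<Rightarrow> (real \<Rightarrow> real) \<Rightarrow> ereal" where
  "kappa \<alpha> P = Liminf sequentially (\<lambda>i. ereal (P (q_alpha P \<alpha> i) / r_alpha P \<alpha> i))"

definition nu_hat :: "real \<Rightarrow> real^3 \<Rightarrow> real" where
  "nu_hat \<mu> u = Sup {\<nu>. \<exists>X0. \<forall>X\<ge>X0. \<exists>x. int_point x \<and> x \<noteq> 0 \<and> norm x \<le> X \<and>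
        norm (cross3 u x) \<le> min (X powr (-\<nu>)) (norm x powr (-\<mu>))}"

end

theory Submission
  imports Defs
begin


lemma int_point_norm_ge1:
  assumes "int_point x" "x \<noteq> 0" shows "norm x \<ge> 1"
proof -
  obtain i where i: "x $ i \<noteq> 0" using assms(2) by (metis vec_eq_iff zero_index)
  have "x $ i \<in> \<int>" using assms(1) by (simp add: int_point_def)
  then have "\<bar>x $ i\<bar> \<ge> 1" using i Ints_nonzero_abs_ge1 by blast
  then show ?thesis using component_le_norm_cart[of x i] by linarith
qed

lemma vec3_eq: "(x::real^3) = vector [x$1, x$2, x$3]"
  by (simp add: vec_eq_iff forall_3)

lemma finite_int_points: "finite {x::real^3. int_point x \<and> norm x \<le> R}"
proof -
  define n where "n = \<lceil>R\<rceil>"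
  have "{x::real^3. int_point x \<and> norm x \<le> R} \<subseteq>
     (\<lambda>(a,b,c). vector [of_int a, of_int b, of_int c]) ` ({-n..n} \<times> {-n..n} \<times> {-n..n})"
  proof
    fix x :: "real^3" assume x: "x \<in> {x. int_point x \<and> norm x \<le> R}"
    have c: "\<exists>m. x $ i = of_int m \<and> m \<in> {-n..n}" for i
    proof -
      obtain m where m: "x $ i = of_int m" using x by (auto simp: int_point_def elim!: Ints_cases)
      have "\<bar>x $ i\<bar> \<le> R" using component_le_norm_cart[of x i] x by auto
      then have "\<bar>of_int m\<bar> \<le> R" using m by simp
      then have "m \<in> {-n..n}" unfolding n_def by (auto simp: abs_le_iff; linarith)
      with m show ?thesis by blast
    qed
    obtain a b c where "x $ 1 = of_int a" "a \<in> {-n..n}" "x $ 2 = of_int b" "b \<in> {-n..n}"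
       "x $ 3 = of_int c" "c \<in> {-n..n}" using c by metis
    moreover have "x = vector [of_int a, of_int b, of_int c]"
      using \<open>x $ 1 = of_int a\<close> \<open>x $ 2 = of_int b\<close> \<open>x $ 3 = of_int c\<close>
      by (simp add: vec_eq_iff forall_3)
    ultimately show "x \<in> (\<lambda>(a,b,c). vector [of_int a, of_int b, of_int c]) ` ({-n..n} \<times> {-n..n} \<times> {-n..n})"
      by (intro image_eqI[of _ _ "(a,b,c)"]) auto
  qed
  then show ?thesis by (rule finite_subset) auto
qed

lemma int_point_cross: "int_point x \<Longrightarrow> int_point y \<Longrightarrow> int_point (cross3 x y)"
  by (simp add: int_point_def forall_3 cross_components)

lemma norm_cross_le: "norm (cross3 x y) \<le> norm x * norm y"
proof -
  have "(norm (cross3 x y))\<^sup>2 \<le> (norm x * norm y)\<^sup>2"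
    using norm_cross[of x y] by (simp add: power_mult_distrib)
  then show ?thesis by (simp add: power2_le_iff_abs_le)
qed

lemma inf_min_lf:
  fixes S T :: "real set"
  assumes lf: "\<forall>b. finite {s\<in>S. s \<le> b}" and T: "T \<subseteq> S" "T \<noteq> {}"
  shows "Inf T \<in> T \<and> (\<forall>t\<in>T. Inf T \<le> t)"
proof -
  obtain t0 where t0: "t0 \<in> T" using T by auto
  define F where "F = {s\<in>T. s \<le> t0}"
  have fF: "finite F" unfolding F_def by (rule finite_subset[OF _ lf[rule_format, of t0]]) (use T in auto)
  have t0F: "t0 \<in> F" using t0 by (simp add: F_def)
  define m where "m = Min F"
  have mF: "m \<in> F" unfolding m_def using fF t0F by (intro Min_in) auto
  have ml: "\<forall>t\<in>T. m \<le> t"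
  proof
    fix t assume t: "t \<in> T"
    show "m \<le> t"
    proof (cases "t \<le> t0")
      case True then have "t \<in> F" using t by (simp add: F_def)
      then show ?thesis unfolding m_def using fF by simp
    next
      case False then show ?thesis using mF by (auto simp: F_def)
    qed
  qed
  have "Inf T = m" using mF ml by (intro cInf_eq_minimum) (auto simp: F_def)
  then show ?thesis using mF ml by (auto simp: F_def)
qed

lemma enum_props:
  fixes S :: "real set"
  assumes inf: "\<forall>b. \<exists>s\<in>S. s > b" and lf: "\<forall>b. finite {s\<in>S. s \<le> b}"
  shows "\<And>i. enum_real S i \<in> S" "\<And>i. enum_real S i < enum_real S (Suc i)"
    and "\<And>s. s \<in> S \<Longrightarrow> \<exists>i. enum_real S i = s"
proof -
  have ne: "S \<noteq> {}" using inf by auto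
  have st: "enum_real S i \<in> S \<and> enum_real S i < enum_real S (Suc i)
      \<and> (\<forall>t\<in>S. t > enum_real S i \<longrightarrow> enum_real S (Suc i) \<le> t)" for i
  proof -
    have e0: "enum_real S i \<in> S"
    proof (cases i)
      case 0 then show ?thesis using inf_min_lf[OF lf _ ne] by simp
    next
      case (Suc j)
      obtain s where "s \<in> S" "s > enum_real S j" using inf by blast
      then have "{t \<in> S. t > enum_real S j} \<noteq> {}" by auto
      then show ?thesis using inf_min_lf[OF lf, of "{t \<in> S. t > enum_real S j}"] Suc by auto
    qed
    obtain s where "s \<in> S" "s > enum_real S i" using inf by blast
    then have "{t \<in> S. t > enum_real S i} \<noteq> {}" by auto
    then have "Inf {t \<in> S. t > enum_real S i} \<in> {t \<in> S. t > enum_real S i} \<and>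
       (\<forall>t\<in>{t \<in> S. t > enum_real S i}. Inf {t \<in> S. t > enum_real S i} \<le> t)"
      using inf_min_lf[OF lf, of "{t \<in> S. t > enum_real S i}"] by auto
    then show ?thesis using e0 by auto
  qed
  show "\<And>i. enum_real S i \<in> S" "\<And>i. enum_real S i < enum_real S (Suc i)" using st by auto
  have sm: "strict_mono (enum_real S)" using st by (simp add: strict_mono_Suc_iff)
  fix s assume s: "s \<in> S"
  have ex: "\<exists>i. s \<le> enum_real S i"
  proof (rule ccontr)
    assume "\<not> ?thesis"
    then have "range (enum_real S) \<subseteq> {t\<in>S. t \<le> s}" using st by (auto simp: not_le less_imp_le)
    then have "finite (range (enum_real S))" using lf by (meson finite_subset)
    moreover have "inj (enum_real S)" using sm by (rule strict_mono_imp_inj_on)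
    ultimately show False using finite_imageD by (metis infinite_UNIV_nat)
  qed
  define n where "n = (LEAST i. s \<le> enum_real S i)"
  have n1: "s \<le> enum_real S n" unfolding n_def using ex by (rule LeastI_ex)
  show "\<exists>i. enum_real S i = s"
  proof (cases n)
    case 0
    then have "enum_real S n \<le> s" using inf_min_lf[OF lf _ ne] s by simp
    then show ?thesis using n1 by (intro exI[of _ n]) simp
  next
    case (Suc m)
    have "\<not> s \<le> enum_real S m" unfolding n_def
      using Suc n_def not_less_Least by (metis lessI)
    then have "enum_real S n \<le> s" using st[of m] s Suc by auto
    then show ?thesis using n1 by (intro exI[of _ n]) simp
  qed
qed

locale setting =
  fixes xi eta :: real
  assumes indep: "\<And>a b c :: rat. of_rat a + of_rat b * xi + of_rat c * eta = 0 \<Longrightarrow> a = 0 \<and> b = 0 \<and> c = 0"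
begin

definition u :: "real^3" where "u = vector [1, xi, eta]"
definition D :: "real^3 \<Rightarrow> real" where "D x = norm (cross3 x u)"
definition Z :: "(real^3) set" where "Z = {x. int_point x \<and> x \<noteq> 0}"
definition fx :: "real^3 \<Rightarrow> real \<Rightarrow> real" where "fx x q = min (q - ln (norm x)) (- ln (D x))"
definition kk :: "real^3 \<Rightarrow> real" where "kk x = ln (norm x) - ln (D x)"
definition P :: "real \<Rightarrow> real" where "P q = - L1star u q"

lemma norm_u: "norm u \<ge> 1"
  using component_le_norm_cart[of u 1] by (simp add: u_def)

lemma xi_irr: "of_int a * xi = of_int b \<Longrightarrow> a = 0"
  using indep[of "- of_int b" "of_int a" 0] by (simp add: of_rat_minus)

lemma D_pos: assumes "x \<in> Z" shows "D x > 0"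
proof (rule ccontr)
  assume "\<not> D x > 0"
  then have c: "cross3 x u = 0" by (simp add: D_def)
  have e1: "x$2 = x$1 * xi" "x$3 = x$1 * eta"
    using arg_cong[OF c, of "\<lambda>v. v$3"] arg_cong[OF c, of "\<lambda>v. v$2"]
    by (auto simp: cross_components u_def algebra_simps)
  have ip: "int_point x" "x \<noteq> 0" using assms by (auto simp: Z_def)
  obtain a where a: "x$1 = of_int a" using ip by (auto simp: int_point_def elim!: Ints_cases)
  obtain b where b: "x$2 = of_int b" using ip by (auto simp: int_point_def elim!: Ints_cases)
  have "a = 0" using xi_irr[of a b] e1 a b by simp
  then have "x = 0" using e1 a by (simp add: vec_eq_iff forall_3)
  with ip show False by simp
qed

lemma Z_norm: "x \<in> Z \<Longrightarrow> norm x \<ge> 1"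
  by (auto simp: Z_def int_point_norm_ge1)

lemma axis_Z: "axis 1 1 \<in> Z"
  by (auto simp: Z_def int_point_def axis_def vec_eq_iff)


definition lam :: "real^3 \<Rightarrow> real \<Rightarrow> real" where "lam x q = max (norm x / exp q) (D x)"

lemma lam_pos: "x \<in> Z \<Longrightarrow> lam x q > 0"
  using D_pos[of x] by (auto simp: lam_def)

lemma fx_lam: assumes "x \<in> Z" shows "fx x q = - ln (lam x q)"
proof -
  have n: "norm x > 0" using Z_norm[OF assms] by linarith
  have d: "D x > 0" using D_pos[OF assms] .
  have "ln (lam x q) = max (ln (norm x / exp q)) (ln (D x))"
    unfolding lam_def using n d by (auto simp: max_def)
  also have "ln (norm x / exp q) = ln (norm x) - q" using n by (simp add: ln_div)
  finally show ?thesis by (simp add: fx_def min_def max_def)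
qed

lemma P_max: "\<exists>x\<in>Z. P q = fx x q \<and> (\<forall>y\<in>Z. fx y q \<le> P q)"
proof -
  define x0 :: "real^3" where "x0 = axis 1 1"
  have x0: "x0 \<in> Z" using axis_Z by (simp add: x0_def)
  define F where "F = {x. int_point x \<and> norm x \<le> lam x0 q * exp q} \<inter> Z"
  have fF: "finite F" unfolding F_def using finite_int_points by auto
  have "norm x0 / exp q \<le> lam x0 q" by (simp add: lam_def)
  then have "norm x0 \<le> lam x0 q * exp q" by (simp add: field_simps)
  then have x0F: "x0 \<in> F" using x0 by (auto simp: F_def Z_def)
  define m where "m = Min ((\<lambda>x. lam x q) ` F)"
  have "m \<in> (\<lambda>x. lam x q) ` F" unfolding m_def using fF x0F by (intro Min_in) auto
  then obtain xm where xm: "xm \<in> F" "lam xm q = m" by auto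
  have xmZ: "xm \<in> Z" using xm by (simp add: F_def)
  have minF: "\<forall>y\<in>F. m \<le> lam y q" unfolding m_def using fF by auto
  have minZ: "lam xm q \<le> lam y q" if "y \<in> Z" for y
  proof (cases "y \<in> F")
    case True then show ?thesis using minF xm by auto
  next
    case False
    then have "norm y > lam x0 q * exp q" using that by (auto simp: F_def Z_def)
    then have "norm y / exp q > lam x0 q" by (simp add: field_simps)
    moreover have "lam y q \<ge> norm y / exp q" by (simp add: lam_def)
    moreover have "lam xm q \<le> lam x0 q" using minF x0F xm by auto
    ultimately show ?thesis by linarith
  qed
  define A where "A = {lam. lam > 0 \<and> (\<exists>x. int_point x \<and> x \<noteq> 0 \<and>
      norm x \<le> lam * exp q \<and> norm (cross3 x u) \<le> lam)}"
  have "lam xm q \<in> A"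
  proof -
    have "norm xm / exp q \<le> lam xm q" by (simp add: lam_def)
    then have "norm xm \<le> lam xm q * exp q" by (simp add: field_simps)
    then show ?thesis using xmZ lam_pos[OF xmZ] unfolding A_def
      by (auto simp: Z_def D_def lam_def)
  qed
  moreover have "\<forall>l\<in>A. lam xm q \<le> l"
  proof
    fix l assume "l \<in> A"
    then obtain y where y: "y \<in> Z" "norm y \<le> l * exp q" "D y \<le> l"
      unfolding A_def by (auto simp: Z_def D_def)
    have "norm y / exp q \<le> l" using y(2) by (simp add: field_simps)
    then have "lam y q \<le> l" using y(3) by (simp add: lam_def)
    then show "lam xm q \<le> l" using minZ[OF y(1)] by linarith
  qed
  ultimately have "Inf A = lam xm q" by (intro cInf_eq_minimum) auto
  then have Pq: "P q = fx xm q" unfolding P_def L1star_def A_def[symmetric]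
    using fx_lam[OF xmZ] by simp
  have "fx y q \<le> P q" if "y \<in> Z" for y
    unfolding Pq fx_lam[OF that] fx_lam[OF xmZ]
    using minZ[OF that] lam_pos[OF xmZ, of q] by simp
  then show ?thesis using xmZ Pq by blast
qed

lemma P_ge: "y \<in> Z \<Longrightarrow> fx y q \<le> P q"
  using P_max by blast

lemma P_le: "P q \<le> q"
proof -
  obtain x where "x \<in> Z" "P q = fx x q" using P_max by blast
  moreover have "ln (norm x) \<ge> 0" using Z_norm[OF \<open>x\<in>Z\<close>] by simp
  ultimately show ?thesis by (simp add: fx_def)
qed

lemma fx_mono: "s \<le> t \<Longrightarrow> fx x s \<le> fx x t"
  by (simp add: fx_def min_def)

lemma P_mono: "s \<le> t \<Longrightarrow> P s \<le> P t"
proof -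
  assume st: "s \<le> t"
  obtain x where "x \<in> Z" "P s = fx x s" using P_max by blast
  then show ?thesis using fx_mono[OF st, of x] P_ge[of x t] by linarith
qed

lemma fx_lip: "\<bar>fx x s - fx x t\<bar> \<le> \<bar>s - t\<bar>"
  by (simp add: fx_def min_def abs_if)

lemma fx_left: "t \<le> kk x \<Longrightarrow> fx x t = t - ln (norm x)"
  by (simp add: fx_def kk_def min_def)

lemma fx_right: "kk x \<le> t \<Longrightarrow> fx x t = - ln (D x)"
  by (simp add: fx_def kk_def min_def)


definition pmin :: "real^3 \<Rightarrow> bool" where
  "pmin x \<longleftrightarrow> x \<in> Z \<and> (\<forall>y\<in>Z. norm y \<le> norm x \<and> D y \<le> D x \<longrightarrow> norm y = norm x \<and> D y = D x)"

lemma finite_Z_bounded: "finite {y\<in>Z. norm y \<le> R}"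
  by (rule finite_subset[OF _ finite_int_points[of R]]) (auto simp: Z_def)

lemma pmin_dom: assumes "x \<in> Z" shows "\<exists>z. pmin z \<and> norm z \<le> norm x \<and> D z \<le> D x"
proof -
  define F where "F = {y\<in>Z. norm y \<le> norm x \<and> D y \<le> D x}"
  have fF: "finite F" unfolding F_def by (rule finite_subset[OF _ finite_Z_bounded[of "norm x"]]) auto
  have xF: "x \<in> F" using assms by (simp add: F_def)
  define m where "m = Min ((\<lambda>y. norm y + D y) ` F)"
  have "m \<in> (\<lambda>y. norm y + D y) ` F" unfolding m_def using fF xF by (intro Min_in) auto
  then obtain z where z: "z \<in> F" "norm z + D z = m" by auto
  have mn: "\<forall>y\<in>F. m \<le> norm y + D y" unfolding m_def using fF by auto
  have "\<forall>y\<in>Z. norm y \<le> norm z \<and> D y \<le> D z \<longrightarrow> norm y = norm z \<and> D y = D z"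
  proof (intro ballI impI)
    fix y assume y: "y \<in> Z" "norm y \<le> norm z \<and> D y \<le> D z"
    then have "y \<in> F" using z by (auto simp: F_def)
    then have "m \<le> norm y + D y" using mn by auto
    then show "norm y = norm z \<and> D y = D z" using y z by linarith
  qed
  then have "pmin z" using z by (simp add: pmin_def F_def)
  then show ?thesis using z by (auto simp: F_def)
qed

lemma pmin_tri:
  assumes "pmin x" "pmin y"
  shows "(norm x = norm y \<and> D x = D y) \<or> (norm x < norm y \<and> D y < D x) \<or> (norm y < norm x \<and> D x < D y)"
proof -
  have xZ: "x \<in> Z" and yZ: "y \<in> Z" using assms by (auto simp: pmin_def)
  have a: "norm y \<le> norm x \<and> D y \<le> D x \<longrightarrow> norm y = norm x \<and> D y = D x"
    using assms(1) yZ by (auto simp: pmin_def)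
  have b: "norm x \<le> norm y \<and> D x \<le> D y \<longrightarrow> norm x = norm y \<and> D x = D y"
    using assms(2) xZ by (auto simp: pmin_def)
  show ?thesis using a b by linarith
qed

lemma Z_pos: "x \<in> Z \<Longrightarrow> norm x > 0"
  using Z_norm[of x] by linarith

lemma pmin_kk_less:
  assumes "pmin x" "pmin y" "kk x < kk y"
  shows "norm x < norm y \<and> D y < D x"
proof -
  have xZ: "x \<in> Z" and yZ: "y \<in> Z" using assms by (auto simp: pmin_def)
  note p = Z_pos[OF xZ] Z_pos[OF yZ] D_pos[OF xZ] D_pos[OF yZ]
  have "\<not> (norm x = norm y \<and> D x = D y)" using assms(3) by (auto simp: kk_def)
  moreover have "\<not> (norm y < norm x \<and> D x < D y)"
  proof
    assume h: "norm y < norm x \<and> D x < D y"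
    then have "ln (norm y) < ln (norm x)" "ln (D x) < ln (D y)" using p by auto
    then show False using assms(3) by (simp add: kk_def)
  qed
  ultimately show ?thesis using pmin_tri[OF assms(1,2)] by blast
qed

lemma pmin_kk_eq:
  assumes "pmin x" "pmin y" "kk x = kk y"
  shows "norm x = norm y \<and> D y = D x"
proof -
  have xZ: "x \<in> Z" and yZ: "y \<in> Z" using assms by (auto simp: pmin_def)
  note p = Z_pos[OF xZ] Z_pos[OF yZ] D_pos[OF xZ] D_pos[OF yZ]
  have "\<not> (norm x < norm y \<and> D y < D x)"
  proof
    assume h: "norm x < norm y \<and> D y < D x"
    then have "ln (norm x) < ln (norm y)" "ln (D y) < ln (D x)" using p by auto
    then show False using assms(3) by (simp add: kk_def)
  qed
  moreover have "\<not> (norm y < norm x \<and> D x < D y)"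
  proof
    assume h: "norm y < norm x \<and> D x < D y"
    then have "ln (norm y) < ln (norm x)" "ln (D x) < ln (D y)" using p by auto
    then show False using assms(3) by (simp add: kk_def)
  qed
  ultimately show ?thesis using pmin_tri[OF assms(1,2)] by auto
qed

lemma P_at_kink: assumes "pmin x" shows "P (kk x) = - ln (D x)"
proof -
  have xZ: "x \<in> Z" using assms by (simp add: pmin_def)
  have ge: "P (kk x) \<ge> - ln (D x)" using P_ge[OF xZ, of "kk x"] fx_right[of x "kk x"] by simp
  obtain y where y: "y \<in> Z" "P (kk x) = fx y (kk x)" using P_max by blast
  note p = Z_pos[OF xZ] Z_pos[OF y(1)] D_pos[OF xZ] D_pos[OF y(1)]
  have "\<not> P (kk x) > - ln (D x)"
  proof
    assume h: "P (kk x) > - ln (D x)"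
    then have "kk x - ln (norm y) > kk x - ln (norm x)" "- ln (D y) > - ln (D x)"
      using y(2) by (auto simp: fx_def kk_def)
    then have "norm y < norm x" "D y < D x" using p by auto
    then show False using assms y(1) by (force simp: pmin_def)
  qed
  then show ?thesis using ge by linarith
qed

lemma fx_dom: assumes "norm y \<le> norm x" "D y \<le> D x" "y \<in> Z" shows "fx x q \<le> fx y q"
proof -
  have p1: "norm y > 0" using Z_pos[OF assms(3)] .
  have p2: "norm x > 0" using p1 assms(1) by linarith
  have p3: "D y > 0" using D_pos[OF assms(3)] .
  have p4: "D x > 0" using p3 assms(2) by linarith
  have "ln (norm y) \<le> ln (norm x)" using assms p1 p2 by simp
  moreover have "ln (D y) \<le> ln (D x)" using assms p3 p4 by simp
  ultimately show ?thesis unfolding fx_def by (intro min.mono) auto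
qed

lemma corner_maxkink:
  assumes q: "q \<in> slope_change_10 P" and x: "x \<in> Z" "fx x q \<ge> P q"
  shows "kk x = q"
proof -
  obtain e where e: "e > 0" "\<forall>t\<in>{q-e..q}. P t = P q - (q - t)" "\<forall>t\<in>{q..q+e}. P t = P q"
    using q unfolding slope_change_10_def by blast
  have fq: "fx x q = P q" using x P_ge[of x q] by linarith
  show ?thesis
  proof (rule ccontr)
    assume "kk x \<noteq> q"
    then consider "kk x > q" | "kk x < q" by linarith
    then show False
    proof cases
      case 1
      define t where "t = q + min e (kk x - q)"
      have t: "q < t" "t \<le> kk x" "t \<le> q + e" using e(1) 1 by (auto simp: t_def)
      have "fx x t = t - ln (norm x)" "fx x q = q - ln (norm x)" using fx_left[of t x] fx_left[of q x] t 1 by auto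
      then have "P t \<ge> P q + (t - q)" using P_ge[OF x(1), of t] fq by linarith
      moreover have "P t = P q" using bspec[OF e(3), of t] t by simp
      ultimately show False using t by linarith
    next
      case 2
      define t where "t = q - min e (q - kk x)"
      have t: "t < q" "kk x \<le> t" "q - e \<le> t" using e(1) 2 by (auto simp: t_def)
      have "fx x t = fx x q" using fx_right[of x t] fx_right[of x q] t 2 by auto
      then have "P t \<ge> P q" using P_ge[OF x(1), of t] fq by linarith
      moreover have "P t = P q - (q - t)" using bspec[OF e(2), of t] t by simp
      ultimately show False using t by linarith
    qed
  qed
qed

lemma corner_imp_pmin:
  assumes q: "q \<in> slope_change_10 P"
  shows "\<exists>x. pmin x \<and> kk x = q"
proof -
  obtain x where x: "x \<in> Z" "P q = fx x q" using P_max by blast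
  have kx: "kk x = q" using corner_maxkink[OF q x(1)] x(2) by simp
  have "\<forall>y\<in>Z. norm y \<le> norm x \<and> D y \<le> D x \<longrightarrow> norm y = norm x \<and> D y = D x"
  proof (intro ballI impI)
    fix y assume y: "y \<in> Z" "norm y \<le> norm x \<and> D y \<le> D x"
    have "fx y q \<ge> P q" using fx_dom[of y x q] y x by auto
    then have ky: "kk y = q" using corner_maxkink[OF q y(1)] by simp
    have "fx y q \<le> P q" using P_ge[OF y(1)] .
    then have "- ln (D y) \<le> - ln (D x)" using fx_right[of y q] fx_right[of x q] ky kx x(2) by simp
    then have "D x \<le> D y" using D_pos[OF x(1)] D_pos[OF y(1)] by simp
    then have dd: "D y = D x" using y by linarith
    then have "ln (norm y) = ln (norm x)" using kx ky by (simp add: kk_def)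
    then have "norm y = norm x" using Z_pos[OF x(1)] Z_pos[OF y(1)] by simp
    then show "norm y = norm x \<and> D y = D x" using dd by simp
  qed
  then have "pmin x" using x(1) by (simp add: pmin_def)
  then show ?thesis using kx by blast
qed

lemma pmin_imp_corner:
  assumes x: "pmin x"
  shows "kk x \<in> slope_change_10 P"
proof -
  define q where "q = kk x"
  have xZ: "x \<in> Z" using x by (simp add: pmin_def)
  have Pq: "P q = - ln (D x)" using P_at_kink[OF x] by (simp add: q_def)
  have fxq: "fx x q = P q" using fx_right[of x q] Pq by (simp add: q_def)
  define F where "F = {y\<in>Z. norm y \<le> exp (q + 1 - P (q - 1))}"
  have fF: "finite F" unfolding F_def by (rule finite_Z_bounded)
  define H where "H = {y\<in>F. fx y q < P q}"
  have fH: "finite H" using fF by (simp add: H_def)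
  define e where "e = Min (insert 3 ((\<lambda>y. P q - fx y q) ` H)) / 3"
  have e0: "e > 0" unfolding e_def using fH by (auto simp: H_def)
  have e1: "e \<le> 1" unfolding e_def using fH by (simp add: Min_le_iff)
  have eH: "3 * e \<le> P q - fx y q" if "y \<in> H" for y
    unfolding e_def using fH that by simp
  have key: "P t = fx x t" if t: "\<bar>t - q\<bar> \<le> e" for t
  proof -
    obtain y where y: "y \<in> Z" "P t = fx y t" using P_max by blast
    have "P t \<ge> P (q - 1)" using P_mono t e1 by auto
    moreover have "fx y t \<le> t - ln (norm y)" by (simp add: fx_def)
    ultimately have "ln (norm y) \<le> q + 1 - P (q - 1)" using y t e1 by linarith
    then have "norm y \<le> exp (q + 1 - P (q - 1))" using Z_norm[OF y(1)]
      by (metis exp_le_cancel_iff exp_ln less_le_trans zero_less_one)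
    then have yF: "y \<in> F" using y by (simp add: F_def)
    have "\<not> fx y q < P q"
    proof
      assume "fx y q < P q"
      then have "y \<in> H" using yF by (simp add: H_def)
      then have "3 * e \<le> P q - fx y q" by (rule eH)
      moreover have "fx y t \<le> fx y q + \<bar>t - q\<bar>" using fx_lip[of y t q] by linarith
      moreover have "fx x t \<ge> fx x q - \<bar>t - q\<bar>" using fx_lip[of x t q] by linarith
      moreover have "fx x t \<le> P t" using P_ge[OF xZ] .
      ultimately show False using y(2) fxq t e0 by linarith
    qed
    then have "fx y q \<ge> - ln (D x)" using Pq by simp
    then have "q - ln (norm y) \<ge> q - ln (norm x)" "- ln (D y) \<ge> - ln (D x)"
      by (auto simp: fx_def q_def kk_def)
    then have "norm y \<le> norm x" "D y \<le> D x"
      using Z_pos[OF xZ] Z_pos[OF y(1)] D_pos[OF xZ] D_pos[OF y(1)] by auto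
    then have "norm y = norm x \<and> D y = D x" using x y(1) by (auto simp: pmin_def)
    then have "fx y t = fx x t" by (simp add: fx_def)
    then show ?thesis using y by simp
  qed
  have "\<forall>t\<in>{q-e..q}. P t = P q - (q - t)"
  proof
    fix t assume t: "t \<in> {q-e..q}"
    then have "P t = fx x t" using key by auto
    also have "\<dots> = t - ln (norm x)" using t by (intro fx_left) (auto simp: q_def)
    also have "P q = q - ln (norm x)" using fxq fx_left[of q x] by (simp add: q_def)
    ultimately show "P t = P q - (q - t)" by simp
  qed
  moreover have "\<forall>t\<in>{q..q+e}. P t = P q"
  proof
    fix t assume t: "t \<in> {q..q+e}"
    then have "P t = fx x t" using key by auto
    also have "\<dots> = - ln (D x)" using t by (intro fx_right) (auto simp: q_def)
    finally show "P t = P q" using Pq by simp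
  qed
  ultimately show ?thesis using e0 unfolding slope_change_10_def q_def by blast
qed

end




locale setting2 = setting +
  fixes al :: real
  assumes al0: "0 \<le> al"
    and allt: "ereal al < Limsup at_top (\<lambda>q. ereal (P q / q))"
begin

definition Sa where "Sa = {q \<in> slope_change_10 P. al \<le> P q / q}"
definition mu where "mu = al / (1 - al)"

lemma Limsup_le1: "Limsup at_top (\<lambda>q. ereal (P q / q)) \<le> 1"
proof -
  have "\<forall>q\<ge>1. ereal (P q / q) \<le> 1"
  proof (intro allI impI)
    fix q :: real assume "1 \<le> q"
    then have "P q / q \<le> 1" using P_le[of q] by (simp add: divide_le_eq)
    then show "ereal (P q / q) \<le> 1" by simp
  qed
  then have "eventually (\<lambda>q. ereal (P q / q) \<le> 1) at_top"
    unfolding eventually_at_top_linorder by blast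
  then show ?thesis by (rule Limsup_bounded)
qed

lemma al_lt1: "al < 1"
proof -
  have "ereal al < 1" using allt Limsup_le1 by (rule less_le_trans)
  then show ?thesis by (simp add: one_ereal_def)
qed

lemma mu_nonneg: "mu \<ge> 0"
  using al0 al_lt1 by (simp add: mu_def)

lemma beta: "\<exists>\<beta>>0. al < \<beta> \<and> (\<forall>B. \<exists>q>B. P q / q > \<beta>)"
proof -
  obtain b' where b': "ereal al < b'" "b' < Limsup at_top (\<lambda>q. ereal (P q / q))"
    using dense[OF allt] by blast
  have "b' < 1" using b'(2) Limsup_le1 by (rule less_le_trans)
  then obtain \<beta> where b: "b' = ereal \<beta>" using b'(1) by (cases b') (simp_all add: one_ereal_def)
  have bpos: "\<beta> > al" using b'(1) b by simp
  have nle: "\<not> Limsup at_top (\<lambda>q. ereal (P q / q)) \<le> ereal \<beta>" using b'(2) b by simp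
  have "\<not> (\<forall>y>ereal \<beta>. eventually (\<lambda>q. y > ereal (P q / q)) at_top)"
    using nle Limsup_le_iff[of at_top "\<lambda>q. ereal (P q / q)" "ereal \<beta>"] by blast
  then obtain y where y: "y > ereal \<beta>" "\<not> eventually (\<lambda>q. y > ereal (P q / q)) at_top"
    by blast
  have nev: "\<forall>N. \<exists>n\<ge>N. \<not> y > ereal (P n / n)"
    using y(2) unfolding eventually_at_top_linorder by blast
  have "\<exists>q>B. P q / q > \<beta>" for B
  proof -
    obtain q where q: "q \<ge> B + 1" "\<not> y > ereal (P q / q)"
      using nev by blast
    have "y \<le> ereal (P q / q)" using q(2) by (simp add: not_less)
    then have "ereal \<beta> < ereal (P q / q)" using y(1) by (rule order.strict_trans2[rotated])
    then have "\<beta> < P q / q" by simp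
    moreover have "q > B" using q(1) by linarith
    ultimately show ?thesis by blast
  qed
  then show ?thesis using bpos al0 by (intro exI[of _ \<beta>]) auto
qed

lemma ratio_iff:
  assumes z: "pmin z" and k: "kk z > 0"
  shows "al \<le> P (kk z) / kk z \<longleftrightarrow> D z \<le> norm z powr (- mu)"
proof -
  have zZ: "z \<in> Z" using z by (simp add: pmin_def)
  define a where "a = - ln (D z)"
  define b where "b = ln (norm z)"
  have Pk: "P (kk z) = a" using P_at_kink[OF z] by (simp add: a_def)
  have kab: "kk z = b + a" by (simp add: kk_def a_def b_def)
  have om: "1 - al > 0" using al_lt1 by simp
  have "al \<le> P (kk z) / kk z \<longleftrightarrow> al * (b + a) \<le> a" unfolding Pk using k by (simp add: kab le_divide_eq)
  also have "\<dots> \<longleftrightarrow> al * b \<le> (1 - al) * a" by (simp add: algebra_simps)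
  also have "\<dots> \<longleftrightarrow> mu * b \<le> a" using om by (simp add: mu_def field_simps)
  also have "\<dots> \<longleftrightarrow> ln (D z) \<le> - mu * ln (norm z)" unfolding a_def b_def by linarith
  also have "\<dots> \<longleftrightarrow> D z \<le> exp (- mu * ln (norm z))"
    using D_pos[OF zZ] by (metis exp_le_cancel_iff exp_ln)
  also have "exp (- mu * ln (norm z)) = norm z powr (- mu)"
    using Z_pos[OF zZ] by (simp add: powr_def)
  finally show ?thesis .
qed

lemma Sa_sub: "Sa \<subseteq> slope_change_10 P" by (auto simp: Sa_def)

lemma Sa_unbounded: "\<forall>B. \<exists>s\<in>Sa. s > B"
proof
  fix B :: real
  obtain \<beta> where b: "\<beta> > 0" "al < \<beta>" "\<forall>B. \<exists>q>B. P q / q > \<beta>" using beta by blast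
  obtain q where q: "q > max (max B (B / \<beta>)) 0" "P q / q > \<beta>" using b(3) by blast
  have q0: "q > 0" using q by simp
  have Pq: "P q > \<beta> * q" using q(2) q0 by (simp add: field_simps)
  have bq: "\<beta> * q > B" using q b(1) by (simp add: field_simps)
  have Ppos: "P q > 0" using Pq mult_pos_pos[OF b(1) q0] by linarith
  obtain x where x: "x \<in> Z" "P q = fx x q" using P_max by blast
  obtain z where z: "pmin z" "norm z \<le> norm x" "D z \<le> D x" using pmin_dom[OF x(1)] by blast
  have zZ: "z \<in> Z" using z by (simp add: pmin_def)
  have fz: "fx z q = P q" using fx_dom[OF z(2,3) zZ, of q] x P_ge[OF zZ, of q] by linarith
  define k where "k = kk z"
  have kS: "k \<in> slope_change_10 P" using pmin_imp_corner[OF z(1)] by (simp add: k_def)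
  have Pk: "P k = - ln (D z)" using P_at_kink[OF z(1)] by (simp add: k_def)
  have lnN: "ln (norm z) \<ge> 0" using Z_norm[OF zZ] by simp
  have main: "k > B \<and> al \<le> P k / k"
  proof (cases "k \<ge> q")
    case True
    have "fx z q = q - ln (norm z)" using fx_left[of q z] True by (simp add: k_def)
    moreover have "P k = k - ln (norm z)" using Pk by (simp add: k_def kk_def)
    ultimately have e1: "P q = q - ln (norm z)" "P k = k - ln (norm z)" using fz by auto
    have c: "q * ln (norm z) \<le> k * ln (norm z)" using True lnN by (simp add: mult_right_mono)
    have "k * P q \<le> q * P k" unfolding e1 using c by (simp add: algebra_simps)
    then have "P k / k \<ge> P q / q"
      using True q0 by (simp add: field_simps)
    then show ?thesis using True q b(2) by auto
  next
    case False
    have "fx z q = - ln (D z)" using fx_right[of z q] False by (simp add: k_def)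
    then have PkPq: "P k = P q" using Pk fz by simp
    have "P k \<le> k" by (rule P_le)
    then have kge: "k \<ge> P q" using PkPq by simp
    then have k0: "k > 0" using Ppos by simp
    have "P q / q \<le> P k / k" using PkPq False k0 Ppos
      by (simp add: divide_left_mono)
    then show ?thesis using kge Pq bq q(2) b(2) by auto
  qed
  then show "\<exists>s\<in>Sa. s > B" using kS by (auto simp: Sa_def)
qed

lemma S_lf: "finite {s\<in>slope_change_10 P. s \<le> b}"
proof -
  define x0 :: "real^3" where "x0 = axis 1 1"
  have x0: "x0 \<in> Z" "norm x0 = 1" using axis_Z by (auto simp: x0_def)
  define c0 where "c0 = - ln (D x0)"
  define R where "R = exp (max 0 (b - c0))"
  have "{s\<in>slope_change_10 P. s \<le> b} \<subseteq> kk ` {y\<in>Z. norm y \<le> R}"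
  proof
    fix s assume s: "s \<in> {s\<in>slope_change_10 P. s \<le> b}"
    then have sS: "s \<in> slope_change_10 P" and sb: "s \<le> b" by auto
    obtain x where x: "pmin x" "kk x = s" using corner_imp_pmin[OF sS] by blast
    have xZ: "x \<in> Z" using x by (simp add: pmin_def)
    have "P s = - ln (D x)" using P_at_kink[OF x(1)] x(2) by simp
    then have lnN: "ln (norm x) = s - P s" using x(2) by (simp add: kk_def)
    have "P s \<ge> fx x0 s" by (rule P_ge[OF x0(1)])
    then have m: "P s \<ge> min s c0" using x0 by (simp add: fx_def c0_def)
    have "ln (norm x) \<le> max 0 (b - c0)"
    proof (cases "s \<le> c0")
      case True then show ?thesis using m lnN by simp
    next
      case False then show ?thesis using m lnN sb by simp
    qed
    then have "exp (ln (norm x)) \<le> R" unfolding R_def by simp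
    then have "norm x \<le> R" using Z_pos[OF xZ] by simp
    then show "s \<in> kk ` {y\<in>Z. norm y \<le> R}" using xZ x(2) by auto
  qed
  moreover have "finite (kk ` {y\<in>Z. norm y \<le> R})" using finite_Z_bounded by blast
  ultimately show ?thesis by (rule finite_subset)
qed

lemma Sa_lf: "\<forall>b. finite {s\<in>Sa. s \<le> b}"
proof
  fix b
  have "{s\<in>Sa. s \<le> b} \<subseteq> {s\<in>slope_change_10 P. s \<le> b}" using Sa_sub by auto
  then show "finite {s\<in>Sa. s \<le> b}" using S_lf by (rule finite_subset)
qed

lemma wedge:
  assumes x: "x \<in> Z" and y: "y \<in> Z" and lt: "norm x < norm y" "D y < D x"
  shows "1/2 \<le> norm y * D x"
proof -
  have x0: "x \<noteq> 0" and y0: "y \<noteq> 0" using x y by (auto simp: Z_def)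
  have cz: "cross3 x y \<noteq> 0"
  proof
    assume "cross3 x y = 0"
    then have "collinear {0, x, y}" by (simp add: cross_eq_0)
    then obtain c where c: "y = c *\<^sub>R x" using x0 y0 collinear_lemma by blast
    have ny: "norm y = \<bar>c\<bar> * norm x" using c by simp
    have dy: "D y = \<bar>c\<bar> * D x" using c by (simp add: D_def cross_mult_left)
    have "\<not> \<bar>c\<bar> \<le> 1"
    proof
      assume "\<bar>c\<bar> \<le> 1"
      then have "\<bar>c\<bar> * norm x \<le> 1 * norm x" by (rule mult_right_mono) simp
      then show False using ny lt(1) by simp
    qed
    then have "\<bar>c\<bar> > 1" by simp
    then have "D y > D x" using dy D_pos[OF x] by simp
    then show False using lt(2) by simp
  qed
  have ipx: "int_point x" and ipy: "int_point y" using x y by (auto simp: Z_def)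
  have ge1: "norm (cross3 x y) \<ge> 1" using int_point_norm_ge1[OF int_point_cross[OF ipx ipy] cz] .
  have nu: "norm u \<ge> 1" by (rule norm_u)
  have uu: "u \<bullet> u = (norm u)\<^sup>2" by (simp add: power2_norm_eq_inner)
  have "norm u > 0" using nu by linarith
  then have uu0: "u \<bullet> u > 0" using uu by simp
  define s where "s = (y \<bullet> u) / (u \<bullet> u)"
  define y' where "y' = y - s *\<^sub>R u"
  have yu: "y' \<bullet> u = 0" using uu0 by (simp add: y'_def s_def inner_diff_left)
  have cy: "cross3 y' u = cross3 y u" by (simp add: y'_def Cross3.left_diff_distrib cross_mult_left)
  have "(norm (cross3 y' u))\<^sup>2 = (norm y' * norm u)\<^sup>2"
    using norm_cross[of y' u] yu by (simp add: power_mult_distrib)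
  then have "norm (cross3 y' u) = norm y' * norm u" by simp
  then have ny': "norm y' * norm u = D y" using cy by (simp add: D_def)
  have ny'2: "norm y' \<le> D y"
  proof -
    have "norm y' * 1 \<le> norm y' * norm u" using nu by (intro mult_left_mono) auto
    then show ?thesis using ny' by simp
  qed
  have cs: "\<bar>y \<bullet> u\<bar> \<le> norm y * norm u" by (rule Cauchy_Schwarz_ineq2)
  have "\<bar>s\<bar> = \<bar>y \<bullet> u\<bar> / (norm u)\<^sup>2" unfolding s_def uu by (simp add: abs_div)
  also have "\<dots> \<le> norm y * norm u / (norm u)\<^sup>2" using cs by (rule divide_right_mono) simp
  also have "\<dots> = norm y / norm u" using nu by (simp add: power2_eq_square)
  also have "\<dots> \<le> norm y / 1" using nu by (intro divide_left_mono) auto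
  finally have sb: "\<bar>s\<bar> \<le> norm y" by simp
  have dec: "cross3 x y = cross3 x y' + s *\<^sub>R cross3 x u"
    by (simp add: y'_def Cross3.right_diff_distrib cross_mult_right)
  have "norm (cross3 x y) \<le> norm (cross3 x y') + \<bar>s\<bar> * D x"
    unfolding dec using norm_triangle_ineq[of "cross3 x y'" "s *\<^sub>R cross3 x u"] by (simp add: D_def)
  also have "norm (cross3 x y') \<le> norm x * norm y'" by (rule norm_cross_le)
  also have "norm x * norm y' \<le> norm x * D y" using ny'2 by (simp add: mult_left_mono)
  also have "\<bar>s\<bar> * D x \<le> norm y * D x" using sb D_pos[OF x] by (simp add: mult_right_mono)
  also have "norm x * D y \<le> norm y * D x" using lt D_pos[OF y] by (simp add: mult_mono less_imp_le)
  finally show ?thesis using ge1 by linarith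
qed

definition qa where "qa = enum_real Sa"

lemma qa_in: "qa i \<in> Sa" and qa_less: "qa i < qa (Suc i)" and qa_all: "s \<in> Sa \<Longrightarrow> \<exists>i. qa i = s"
  unfolding qa_def using enum_props[OF Sa_unbounded Sa_lf] by auto

lemma qa_sm: "strict_mono qa" using qa_less by (simp add: strict_mono_Suc_iff)

definition xs where "xs i = (SOME x. pmin x \<and> kk x = qa i)"

lemma xs: "pmin (xs i) \<and> kk (xs i) = qa i"
proof -
  have "\<exists>x. pmin x \<and> kk x = qa i" using corner_imp_pmin qa_in Sa_sub by blast
  then show ?thesis unfolding xs_def by (rule someI_ex)
qed

lemma xsZ: "xs i \<in> Z" using xs by (simp add: pmin_def)

definition NN where "NN i = norm (xs i)"
definition DD where "DD i = D (xs i)"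

lemma mono_ND: "i < j \<Longrightarrow> NN i < NN j \<and> DD j < DD i"
  using pmin_kk_less[of "xs i" "xs j"] xs qa_sm by (auto simp: NN_def DD_def strict_mono_def)

lemma mono_ND': "i \<le> j \<Longrightarrow> NN i \<le> NN j \<and> DD j \<le> DD i"
  using mono_ND[of i j] by (cases "i = j") auto

lemma P_qa: "P (qa i) = - ln (DD i)"
  using P_at_kink[of "xs i"] xs by (simp add: DD_def)

lemma lnN_qa: "qa i - P (qa i) = ln (NN i)"
  using xs[of i] P_qa[of i] by (simp add: kk_def NN_def DD_def)

lemma NN_ge1: "NN i \<ge> 1" using Z_norm[OF xsZ] by (simp add: NN_def)
lemma DD_pos: "DD i > 0" using D_pos[OF xsZ] by (simp add: DD_def)

lemma qa_unbounded: "\<exists>i0. \<forall>i\<ge>i0. qa i > B"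
proof -
  obtain s where "s \<in> Sa" "s > B" using Sa_unbounded by blast
  then obtain j where "qa j > B" using qa_all by blast
  then show ?thesis using qa_sm by (metis less_le_trans strict_mono_less_eq)
qed

lemma NN_unbounded: "\<exists>i0. \<forall>i\<ge>i0. NN i > R"
proof (rule ccontr)
  assume "\<not> ?thesis"
  then have h: "\<forall>i0. \<exists>i\<ge>i0. NN i \<le> R" by (auto simp: not_less)
  have allR: "NN i \<le> R" for i
  proof -
    obtain j where "j \<ge> i" "NN j \<le> R" using h by blast
    then show ?thesis using mono_ND'[of i j] by linarith
  qed
  have "range xs \<subseteq> {y\<in>Z. norm y \<le> R}" using allR xsZ by (auto simp: NN_def)
  then have "finite (range xs)" using finite_Z_bounded by (meson finite_subset)
  moreover have "inj xs"
  proof (rule injI)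
    fix i j assume "xs i = xs j"
    then have "NN i = NN j" by (simp add: NN_def)
    then show "i = j" using mono_ND[of i j] mono_ND[of j i] by (metis less_irrefl nat_neq_iff)
  qed
  ultimately show False using finite_imageD by (metis infinite_UNIV_nat)
qed

lemma powr_le1: "1 \<le> a \<Longrightarrow> a powr (- mu) \<le> 1"
  using mu_nonneg by (simp add: powr_def mult_nonneg_nonneg)

lemma powr_anti: "1 \<le> a \<Longrightarrow> a \<le> b \<Longrightarrow> b powr (- mu) \<le> a powr (- mu)"
proof -
  assume a: "1 \<le> a" "a \<le> b"
  then have "ln a \<le> ln b" by simp
  then have "- mu * ln b \<le> - mu * ln a" using mu_nonneg by (simp add: mult_left_mono)
  then show ?thesis using a by (simp add: powr_def)
qed

lemma W_qa: "qa i > 0 \<Longrightarrow> DD i \<le> NN i powr (- mu)"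
  using ratio_iff[of "xs i"] xs[of i] qa_in[of i] by (simp add: Sa_def NN_def DD_def)

lemma DD_le1: "qa i > 0 \<Longrightarrow> DD i \<le> 1"
  using W_qa powr_le1[OF NN_ge1] order.trans by blast

lemma keyB:
  assumes i: "qa i > 0" and x: "x \<in> Z" "D x \<le> norm x powr (- mu)" "norm x < NN (Suc i)"
  shows "DD i \<le> D x"
proof (rule ccontr)
  assume "\<not> DD i \<le> D x"
  then have lt: "D x < DD i" by simp
  obtain z where z: "pmin z" "norm z \<le> norm x" "D z \<le> D x" using pmin_dom[OF x(1)] by blast
  have zZ: "z \<in> Z" using z by (simp add: pmin_def)
  have "D z < 1" using lt z DD_le1[OF i] by linarith
  then have "ln (D z) < 0" using D_pos[OF zZ] by simp
  moreover have "ln (norm z) \<ge> 0" using Z_norm[OF zZ] by simp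
  ultimately have k0: "kk z > 0" by (simp add: kk_def)
  have "D z \<le> norm z powr (- mu)"
    using z x(2) powr_anti[OF Z_norm[OF zZ] z(2)] by linarith
  then have "kk z \<in> Sa" using ratio_iff[OF z(1) k0] pmin_imp_corner[OF z(1)] by (simp add: Sa_def)
  then obtain j where j: "qa j = kk z" using qa_all by blast
  have eq: "NN j = norm z \<and> DD j = D z"
    using pmin_kk_eq[of "xs j" z] xs[of j] z(1) j by (auto simp: NN_def DD_def)
  have "j \<le> i"
  proof (rule ccontr)
    assume "\<not> j \<le> i"
    then have "NN (Suc i) \<le> NN j" using mono_ND'[of "Suc i" j] by simp
    then show False using eq z(2) x(3) by linarith
  qed
  then have "DD i \<le> DD j" using mono_ND' by blast
  then show False using eq z(3) lt by linarith
qed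

lemma wedge_qa: "1/2 \<le> NN (Suc i) * DD i"
  using wedge[OF xsZ xsZ, of i "Suc i"] mono_ND[of i "Suc i"] by (simp add: NN_def DD_def)


lemma Du: "norm (cross3 u x) = D x"
  by (metis D_def cross_skew norm_minus_cancel)

definition i0 where "i0 = (SOME i0. \<forall>i\<ge>i0. qa i > 0 \<and> NN i > 2)"

lemma i0: "i \<ge> i0 \<Longrightarrow> qa i > 0 \<and> NN i > 2"
proof -
  obtain a where a: "\<forall>i\<ge>a. qa i > 0" using qa_unbounded by blast
  obtain b where b: "\<forall>i\<ge>b. NN i > 2" using NN_unbounded by blast
  have "\<exists>i0. \<forall>i\<ge>i0. qa i > 0 \<and> NN i > 2" using a b by (intro exI[of _ "max a b"]) auto
  then have "\<forall>i\<ge>i0. qa i > 0 \<and> NN i > 2" unfolding i0_def by (rule someI_ex)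
  then show "i \<ge> i0 \<Longrightarrow> qa i > 0 \<and> NN i > 2" by blast
qed

definition nu where "nu i = - ln (DD i) / ln (NN (Suc i))"

lemma tail:
  assumes "i \<ge> i0"
  shows "ln (NN (Suc i)) > 0" "- ln (DD i) \<ge> 0" "nu i \<ge> 0" "nu i \<le> 2"
    "qa i > 0" "NN (Suc i) > 2"
proof -
  have q: "qa i > 0" and n: "NN i > 2" using i0 assms by auto
  have n': "NN (Suc i) > 2" using i0[of "Suc i"] assms by auto
  show "qa i > 0" "NN (Suc i) > 2" using q n' by auto
  have lp: "ln (NN (Suc i)) > ln 2" using n' by simp
  have l2: "ln (2::real) > 0" by simp
  show lpos: "ln (NN (Suc i)) > 0" using lp l2 by linarith
  have d1: "DD i \<le> 1" using DD_le1[OF q] .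
  show a0: "- ln (DD i) \<ge> 0" using d1 DD_pos[of i] by simp
  show "nu i \<ge> 0" unfolding nu_def using a0 lpos by (intro divide_nonneg_pos) auto
  have w: "1/2 \<le> NN (Suc i) * DD i" by (rule wedge_qa)
  then have "1 \<le> (2 * NN (Suc i)) * DD i" by simp
  then have "0 \<le> ln ((2 * NN (Suc i)) * DD i)" by (rule ln_ge_zero)
  also have "ln ((2 * NN (Suc i)) * DD i) = ln 2 + ln (NN (Suc i)) + ln (DD i)"
    using DD_pos[of i] n' by (simp add: ln_mult)
  finally have "- ln (DD i) \<le> ln 2 + ln (NN (Suc i))" by linarith
  then have "- ln (DD i) \<le> 2 * ln (NN (Suc i))" using lp by linarith
  then show "nu i \<le> 2" unfolding nu_def using lpos by (simp only: divide_le_eq) simp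
qed

lemma nu_mul: "i \<ge> i0 \<Longrightarrow> nu i * ln (NN (Suc i)) = - ln (DD i)"
  unfolding nu_def using tail(1)[of i] by simp

definition Nu where "Nu = {\<nu>. \<exists>X0. \<forall>X\<ge>X0. \<exists>x. int_point x \<and> x \<noteq> 0 \<and> norm x \<le> X \<and>
        norm (cross3 u x) \<le> min (X powr (-\<nu>)) (norm x powr (-mu))}"

lemma E1:
  assumes "\<nu> \<in> Nu" shows "\<exists>i1. \<forall>i\<ge>i1. \<nu> \<le> nu i"
proof (cases "\<nu> \<le> 0")
  case True then show ?thesis using tail(3) by (meson order.trans)
next
  case False
  then have v0: "\<nu> > 0" by simp
  obtain X0 where X0: "\<forall>X\<ge>X0. \<exists>x. int_point x \<and> x \<noteq> 0 \<and> norm x \<le> X \<and>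
        norm (cross3 u x) \<le> min (X powr (-\<nu>)) (norm x powr (-mu))" using assms by (auto simp: Nu_def)
  obtain a where a: "\<forall>i\<ge>a. NN i > X0" using NN_unbounded by blast
  have "\<nu> \<le> nu i" if i: "i \<ge> max a i0" for i
  proof -
    have t: "ln (NN (Suc i)) > 0" "qa i > 0" using tail[of i] i by auto
    have cl: "DD i \<le> X powr (-\<nu>)" if X: "NN i \<le> X" "X < NN (Suc i)" for X
    proof -
      have "X \<ge> X0" using a i X by (meson max.boundedE less_le_trans less_imp_le)
      then obtain x where x: "int_point x" "x \<noteq> 0" "norm x \<le> X"
        "norm (cross3 u x) \<le> min (X powr (-\<nu>)) (norm x powr (-mu))" using X0 by blast
      have xZ: "x \<in> Z" using x by (simp add: Z_def)
      have "D x \<le> norm x powr (-mu)" "D x \<le> X powr (-\<nu>)" using x(4) by (auto simp: Du)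
      moreover have "DD i \<le> D x" using keyB[OF t(2) xZ] calculation(1) x(3) X(2) by linarith
      ultimately show ?thesis by linarith
    qed
    show ?thesis
    proof (rule ccontr)
      assume "\<not> \<nu> \<le> nu i"
      then have "nu i * ln (NN (Suc i)) < \<nu> * ln (NN (Suc i))"
        using t(1) by (intro mult_strict_right_mono) auto
      then have h: "- ln (DD i) < \<nu> * ln (NN (Suc i))"
        using nu_mul[of i] i by simp
      define c where "c = - ln (DD i) / \<nu>"
      have cv: "c * \<nu> = - ln (DD i)" using v0 by (simp add: c_def)
      have "c * \<nu> < ln (NN (Suc i)) * \<nu>" using h cv by (simp add: mult.commute)
      then have cl2: "c < ln (NN (Suc i))" using v0 by (meson mult_right_less_imp_less less_imp_le)
      define X where "X = exp (max (ln (NN i)) ((c + ln (NN (Suc i))) / 2))"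
      have "ln (NN i) < ln (NN (Suc i))" using mono_ND[of i "Suc i"] NN_ge1[of i] by simp
      moreover have lnX: "ln X = max (ln (NN i)) ((c + ln (NN (Suc i))) / 2)" by (simp add: X_def)
      ultimately have lX: "ln X < ln (NN (Suc i))" "ln X \<ge> ln (NN i)" "ln X > c"
        using cl2 unfolding lnX max_def by auto
      have Xp: "X > 0" by (simp add: X_def)
      have X1: "NN i \<le> X" "X < NN (Suc i)" using lX(1,2) Xp NN_ge1[of i] NN_ge1[of "Suc i"] by auto
      have "X powr (-\<nu>) = exp (- \<nu> * ln X)" using Xp by (simp add: powr_def)
      also have "\<dots> < exp (- \<nu> * c)" using lX(3) v0 by simp
      also have "- \<nu> * c = ln (DD i)" using cv by (simp add: mult.commute)
      also have "exp (ln (DD i)) = DD i" using DD_pos[of i] by simp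
      finally show False using cl[OF X1] by simp
    qed
  qed
  then show ?thesis by blast
qed

lemma E2:
  assumes "\<exists>i1. \<forall>i\<ge>i1. \<nu> \<le> nu i" shows "\<nu> \<in> Nu"
proof -
  obtain i1 where i1: "\<forall>i\<ge>i1. \<nu> \<le> nu i" using assms by blast
  define i2 where "i2 = max i1 i0"
  have "\<exists>x. int_point x \<and> x \<noteq> 0 \<and> norm x \<le> X \<and>
        norm (cross3 u x) \<le> min (X powr (-\<nu>)) (norm x powr (-mu))" if X: "X \<ge> NN i2" for X
  proof -
    have ex: "\<exists>j. X < NN j" using NN_unbounded[of X] by blast
    define n where "n = (LEAST j. X < NN j)"
    have n1: "X < NN n" unfolding n_def using ex by (rule LeastI_ex)
    have n2: "n > i2"
    proof (rule ccontr)
      assume "\<not> n > i2"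
      then have "NN n \<le> NN i2" using mono_ND' by simp
      then show False using n1 X by linarith
    qed
    define i where "i = n - 1"
    have n: "n = Suc i" and ii: "i \<ge> i2" using n2 by (auto simp: i_def)
    have "i < n" using n by simp
    have "\<not> X < NN i" using not_less_Least[of i "\<lambda>j. X < NN j"] \<open>i < n\<close> unfolding n_def by blast
    then have Ni: "NN i \<le> X" by simp
    have X': "X < NN (Suc i)" using n1 n by simp
    have ti: "i \<ge> i0" "i \<ge> i1" using ii by (auto simp: i2_def)
    have t: "ln (NN (Suc i)) > 0" "qa i > 0" using tail[OF ti(1)] by auto
    have X1: "X \<ge> 1" using Ni NN_ge1[of i] by linarith
    have w: "DD i \<le> NN i powr (-mu)" using W_qa[OF t(2)] .
    have d: "DD i \<le> X powr (-\<nu>)"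
    proof (cases "\<nu> \<ge> 0")
      case True
      have "\<nu> \<le> nu i" using i1 ti by simp
      then have "\<nu> * ln (NN (Suc i)) \<le> nu i * ln (NN (Suc i))" using t(1) by (intro mult_right_mono) auto
      then have "\<nu> * ln (NN (Suc i)) \<le> - ln (DD i)" using nu_mul[OF ti(1)] by simp
      moreover have "ln X \<le> ln (NN (Suc i))" using X' X1 by simp
      ultimately have "\<nu> * ln X \<le> - ln (DD i)" using True by (meson mult_left_mono order.trans)
      then have "ln (DD i) \<le> - \<nu> * ln X" by simp
      then have "DD i \<le> exp (- \<nu> * ln X)" using DD_pos[of i] by (metis exp_le_cancel_iff exp_ln)
      then show ?thesis using X1 by (simp add: powr_def)
    next
      case False
      have d1: "DD i \<le> 1" using DD_le1[OF t(2)] .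
      have "0 \<le> - \<nu> * ln X" using False X1 mult_nonpos_nonneg[of \<nu> "ln X"] by simp
      then have e: "1 \<le> exp (- \<nu> * ln X)" by simp
      have "X powr (-\<nu>) = exp (- \<nu> * ln X)" using X1 by (simp add: powr_def)
      then show ?thesis using d1 e by linarith
    qed
    show ?thesis
      using xsZ[of i] Ni d w by (intro exI[of _ "xs i"]) (auto simp: Z_def Du NN_def DD_def)
  qed
  then show ?thesis unfolding Nu_def by blast
qed

lemma Nu_ne: "0 \<in> Nu" using E2 tail(3) by blast

lemma Nu_bdd: "\<nu> \<in> Nu \<Longrightarrow> \<nu> \<le> 2"
proof -
  assume "\<nu> \<in> Nu"
  then obtain i1 where "\<forall>i\<ge>i1. \<nu> \<le> nu i" using E1 by blast
  then show "\<nu> \<le> 2" using tail(4)[of "max i1 i0"] by (meson max.cobounded1 max.cobounded2 order.trans)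
qed

definition LL where "LL = Sup Nu"

lemma LL_bounds: "0 \<le> LL" "LL \<le> 2"
proof -
  have bdd: "bdd_above Nu" using Nu_bdd by (auto simp: bdd_above_def)
  show "0 \<le> LL" unfolding LL_def using Nu_ne bdd by (rule cSup_upper)
  show "LL \<le> 2" unfolding LL_def using Nu_ne Nu_bdd by (intro cSup_least) auto
qed

lemma F1: "\<nu> < LL \<Longrightarrow> \<exists>i1. \<forall>i\<ge>i1. \<nu> < nu i"
proof -
  assume "\<nu> < LL"
  have bdd: "bdd_above Nu" using Nu_bdd by (auto simp: bdd_above_def)
  have ne: "Nu \<noteq> {}" using Nu_ne by auto
  obtain v where v: "v \<in> Nu" "\<nu> < v" using \<open>\<nu> < LL\<close> less_cSup_iff[OF ne bdd] unfolding LL_def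
    by blast
  then obtain i1 where "\<forall>i\<ge>i1. v \<le> nu i" using E1 by blast
  then show ?thesis using v by (meson less_le_trans)
qed

lemma F2: "\<nu> > LL \<Longrightarrow> \<not> (\<exists>i1. \<forall>i\<ge>i1. \<nu> \<le> nu i)"
proof
  assume "\<nu> > LL" "\<exists>i1. \<forall>i\<ge>i1. \<nu> \<le> nu i"
  then have "\<nu> \<in> Nu" using E2 by blast
  moreover have "bdd_above Nu" using Nu_bdd by (auto simp: bdd_above_def)
  ultimately have "\<nu> \<le> LL" unfolding LL_def by (rule cSup_upper)
  then show False using \<open>\<nu> > LL\<close> by simp
qed

definition rat where "rat i = P (qa i) / (qa (Suc i) - P (qa (Suc i)) + P (qa i))"

lemma rat_eq: "i \<ge> i0 \<Longrightarrow> rat i = nu i / (1 + nu i)"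
proof -
  assume i: "i \<ge> i0"
  have B: "ln (NN (Suc i)) > 0" and A: "- ln (DD i) \<ge> 0" using tail[OF i] by auto
  have "rat i = - ln (DD i) / (ln (NN (Suc i)) + - ln (DD i))"
    unfolding rat_def using lnN_qa[of "Suc i"] P_qa[of i] by simp
  also have "\<dots> = nu i / (1 + nu i)" unfolding nu_def using A B
    by (simp add: field_simps)
  finally show ?thesis .
qed

lemma g_lt: fixes y t :: real assumes "0 \<le> y" "y < 1" "0 \<le> t" shows "(y < t / (1 + t) \<longleftrightarrow> y / (1 - y) < t)"
proof -
  have a: "1 + t > 0" "1 - y > 0" using assms by auto
  have "y < t / (1 + t) \<longleftrightarrow> y * (1 + t) < t" using a(1) by (simp add: less_divide_eq)
  also have "\<dots> \<longleftrightarrow> y < t * (1 - y)" by (simp add: algebra_simps)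
  also have "\<dots> \<longleftrightarrow> y / (1 - y) < t" using a(2) by (simp add: divide_less_eq)
  finally show ?thesis .
qed

lemma g_le: fixes y t :: real assumes "0 \<le> y" "y < 1" "0 \<le> t" shows "(y \<le> t / (1 + t) \<longleftrightarrow> y / (1 - y) \<le> t)"
proof -
  have a: "1 + t > 0" "1 - y > 0" using assms by auto
  have "y \<le> t / (1 + t) \<longleftrightarrow> y * (1 + t) \<le> t" using a(1) by (simp add: le_divide_eq)
  also have "\<dots> \<longleftrightarrow> y \<le> t * (1 - y)" by (simp add: algebra_simps)
  also have "\<dots> \<longleftrightarrow> y / (1 - y) \<le> t" using a(2) by (simp add: divide_le_eq)
  finally show ?thesis .
qed

lemma kappa_main: "Liminf sequentially (\<lambda>i. ereal (rat i)) = ereal (LL / (1 + LL))"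
proof (rule antisym)
  show "ereal (LL / (1 + LL)) \<le> Liminf sequentially (\<lambda>i. ereal (rat i))"
    unfolding le_Liminf_iff
  proof (intro allI impI)
    fix y assume y: "y < ereal (LL / (1 + LL))"
    show "eventually (\<lambda>i. y < ereal (rat i)) sequentially"
    proof (cases "y < 0")
      case True
      have "\<forall>i\<ge>i0. y < ereal (rat i)"
      proof (intro allI impI)
        fix i assume "i \<ge> i0"
        then have "rat i \<ge> 0" using rat_eq tail(3) by simp
        then have "(0::ereal) \<le> ereal (rat i)" by simp
        then show "y < ereal (rat i)" by (rule less_le_trans[OF True])
      qed
      then show ?thesis unfolding eventually_sequentially by blast
    next
      case False
      then obtain y' where y': "y = ereal y'" "0 \<le> y'" using y by (cases y) auto
      have yl: "y' < LL / (1 + LL)" using y y' by simp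
      have "LL / (1 + LL) < 1" using LL_bounds by (simp add: divide_less_eq)
      then have y1: "y' < 1" using yl by linarith
      have "y' / (1 - y') < LL" using g_lt[OF y'(2) y1 LL_bounds(1)] yl by simp
      then obtain i1 where i1: "\<forall>i\<ge>i1. y' / (1 - y') < nu i" using F1 by blast
      have "\<forall>i\<ge>max i1 i0. y < ereal (rat i)"
      proof (intro allI impI)
        fix i assume "i \<ge> max i1 i0"
        then have "i \<ge> i1" "i \<ge> i0" by auto
        then show "y < ereal (rat i)" using i1 g_lt[OF y'(2) y1 tail(3)] rat_eq y' by simp
      qed
      then show ?thesis unfolding eventually_sequentially by blast
    qed
  qed
next
  show "Liminf sequentially (\<lambda>i. ereal (rat i)) \<le> ereal (LL / (1 + LL))"
  proof (rule ccontr)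
    assume "\<not> ?thesis"
    then have lt: "ereal (LL / (1 + LL)) < Liminf sequentially (\<lambda>i. ereal (rat i))" by simp
    have "\<forall>i\<ge>i0. ereal (rat i) \<le> 1"
    proof (intro allI impI)
      fix i assume "i \<ge> i0"
      then have "rat i \<le> 1" using rat_eq[of i] tail(3)[of i] by (simp add: divide_le_eq)
      then show "ereal (rat i) \<le> 1" by simp
    qed
    then have "Liminf sequentially (\<lambda>i. ereal (rat i)) \<le> 1"
      by (intro Liminf_le) (auto simp: eventually_sequentially)
    obtain z where z: "ereal (LL / (1 + LL)) < z" "z < Liminf sequentially (\<lambda>i. ereal (rat i))"
      using dense[OF lt] by blast
    have g0: "0 \<le> LL / (1 + LL)" using LL_bounds by simp
    have zl1: "z < 1" using z(2) \<open>Liminf sequentially (\<lambda>i. ereal (rat i)) \<le> 1\<close>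
      by (rule less_le_trans)
    obtain z' where z': "z = ereal z'" "z' < 1" "LL / (1 + LL) < z'"
      using z(1) zl1 by (cases z) (auto simp: one_ereal_def)
    have zz: "0 \<le> z'" using z' g0 by simp
    have ev: "eventually (\<lambda>i. z < ereal (rat i)) sequentially" using z(2) by (rule less_LiminfD)
    then obtain i1 where i1: "\<forall>i\<ge>i1. z < ereal (rat i)" unfolding eventually_sequentially by blast
    have "\<forall>i\<ge>max i1 i0. z' / (1 - z') \<le> nu i"
    proof (intro allI impI)
      fix i assume "i \<ge> max i1 i0"
      then have "i \<ge> i1" "i \<ge> i0" by auto
      then have "z' < rat i" using i1 z' by simp
      then have "z' < nu i / (1 + nu i)" using rat_eq[OF \<open>i \<ge> i0\<close>] by simp
      then show "z' / (1 - z') \<le> nu i" using g_lt[OF zz z'(2) tail(3)] \<open>i \<ge> i0\<close> by simp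
    qed
    moreover have "z' / (1 - z') > LL"
    proof -
      have "\<not> z' / (1 - z') \<le> LL"
      proof
        assume "z' / (1 - z') \<le> LL"
        then have "z' \<le> LL / (1 + LL)" using g_le[OF zz z'(2) LL_bounds(1)] by simp
        then show False using z' by simp
      qed
      then show ?thesis by simp
    qed
    ultimately show False using F2 by blast
  qed
qed

end


theorem mainTheorem9:
  fixes \<xi> \<eta> \<alpha> :: real
  assumes indep: "\<And>a b c :: rat. of_rat a + of_rat b * \<xi> + of_rat c * \<eta> = 0 \<Longrightarrow> a = 0 \<and> b = 0 \<and> c = 0"
    and \<alpha>0: "0 \<le> \<alpha>"
    and \<alpha>lt: "ereal \<alpha> < Limsup at_top (\<lambda>q. ereal (- L1star (vector [1, \<xi>, \<eta>]) q / q))"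
  shows "kappa \<alpha> (\<lambda>q. - L1star (vector [1, \<xi>, \<eta>]) q) =
         ereal (nu_hat (\<alpha> / (1 - \<alpha>)) (vector [1, \<xi>, \<eta>]) /
                (1 + nu_hat (\<alpha> / (1 - \<alpha>)) (vector [1, \<xi>, \<eta>])))"
proof -
  have s1: "setting \<xi> \<eta>" unfolding setting_def using indep by blast
  interpret s1i: setting \<xi> \<eta> by (rule s1)
  have Pe: "setting.P \<xi> \<eta> = (\<lambda>q. - L1star (vector [1, \<xi>, \<eta>]) q)"
    by (simp add: fun_eq_iff s1i.P_def s1i.u_def)
  have s2: "setting2 \<xi> \<eta> \<alpha>" unfolding setting2_def setting2_axioms_def using s1 \<alpha>0 \<alpha>lt Pe by simp
  interpret setting2 \<xi> \<eta> \<alpha> by (rule s2)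
  have Pe': "(\<lambda>q. - L1star (vector [1, \<xi>, \<eta>]) q) = s1i.P" using Pe by simp
  have qeq: "q_alpha s1i.P \<alpha> = qa" by (simp add: q_alpha_def qa_def Sa_def)
  have k: "kappa \<alpha> s1i.P = Liminf sequentially (\<lambda>i. ereal (rat i))"
    by (simp add: kappa_def r_alpha_def qeq rat_def)
  have n: "nu_hat (\<alpha> / (1 - \<alpha>)) (vector [1, \<xi>, \<eta>]) = LL"
    by (simp add: nu_hat_def LL_def Nu_def mu_def s1i.u_def)
  show ?thesis unfolding Pe' k n by (rule kappa_main)
qed

end
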